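(* Let $(\mathcal{O},g,f)$ be an oriented matroid program with $\mathcal{O}$ of rank $r\ge 3$, and let $(C,X,Y)$ be a modular triple of cocircuits such that $z(C\circ X\circ Y)$ is a flat of rank $r-3$ of $\mathcal{M}(\mathcal{O})$, with $C_g=X_g=Y_g=+$. Let $e\in\operatorname{supp}(C)$ with $(X\circ Y)_e=0$. Let $X^1$ be obtained by cocircuit elimination of $g$ between $-X$ and $C$, and $Y^1$ by cocircuit elimination of $g$ between $-Y$ and $C$. Then $X^1\circ Y^1$ is an edge, and $X\to_{g,f}Y \iff Y^1\to_{e,f}X^1 \iff -X^1\to_{e,f}-Y^1.$
   Context: Oriented matroid $\mathcal{O}$ of rank $r$ on finite $E$, given by its cocircuits (sign vectors in $\{+,-,0\}^E$), underlying matroid $\mathcal{M}(\mathcal{O})$. Notation: $\operatorname{supp}(X)$, $z(X)=E\setminus\operatorname{supp}(X)$, $\operatorname{sep}(X,Y)=\{e:X_e=-Y_e\ne0\}$, $(X\circ Y)_e=X_e$ if $X_e\ne0$, else $Y_e$. An edge is a covector whose zero set is a flat of rank $r-2$; cocircuits $X\ne\pm Y$ are comodular if $X\circ Y$ is an edge. A modular triple of cocircuits $(C,X,Y)$ is one in which each of the three pairs is comodular. For comodular $X,Y$ and $e\in\operatorname{sep}(X,Y)$, cocircuit elimination of $e$ between $X$ and $Y$ yields the unique cocircuit $Z$ with $Z_e=0$ and $Z_h=(X\circ Y)_h$ for $h\notin\operatorname{sep}(X,Y)$. An oriented matroid program $(\mathcal{O},g,f)$: $g\neq f\in E$, $g$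 not a loop, $f$ not a coloop. For distinct $a,b\in E$ and comodular $X,Y$ with $X_a=Y_a\ne0$, let $Z$ be obtained by eliminating $a$ between $-X$ and $Y$; write $X\to_{a,b}Y$ if $Z_b=+$, $X\leftarrow_{a,b}Y$ if $Z_b=-$, $X\leftrightarrow_{a,b}Y$ if $Z_b=0$. *)

theory Defs
  imports Main
begin

datatype sign = Neg | Zer | Pos

fun sneg :: "sign \<Rightarrow> sign" where
  "sneg Neg = Pos" | "sneg Zer = Zer" | "sneg Pos = Neg"

type_synonym 'a svec = "'a \<Rightarrow> sign"

definition zerovec :: "'a svec" where "zerovec = (\<lambda>_. Zer)"

definition vneg :: "'a svec \<Rightarrow> 'a svec" where "vneg X = (\<lambda>e. sneg (X e))"

definition supp :: "'a svec \<Rightarrow> 'a set" where "supp X = {e. X e \<noteq> Zer}"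

definition zset :: "'a set \<Rightarrow> 'a svec \<Rightarrow> 'a set" where "zset E X = E - supp X"

definition sep :: "'a svec \<Rightarrow> 'a svec \<Rightarrow> 'a set" where
  "sep X Y = {e. X e \<noteq> Zer \<and> Y e = sneg (X e)}"

definition comp :: "'a svec \<Rightarrow> 'a svec \<Rightarrow> 'a svec" where
  "comp X Y = (\<lambda>e. if X e \<noteq> Zer then X e else Y e)"

definition oriented_matroid :: "'a set \<Rightarrow> 'a svec set \<Rightarrow> bool" where
  "oriented_matroid E CC \<longleftrightarrow>
     finite E \<and>
     (\<forall>X\<in>CC. supp X \<subseteq> E) \<and>
     zerovec \<notin> CC \<and>
     (\<forall>X\<in>CC. vneg X \<in> CC) \<and>
     (\<forall>X\<in>CC. \<forall>Y\<in>CC. supp X \<subseteq> supp Y \<longrightarrow> X = Y \<or> X = vneg Y) \<and>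
     (\<forall>X\<in>CC. \<forall>Y\<in>CC. \<forall>e\<in>sep X Y. X \<noteq> vneg Y \<longrightarrow>
        (\<exists>Z\<in>CC. Z e = Zer \<and>
           (\<forall>h. Z h = Pos \<longrightarrow> X h = Pos \<or> Y h = Pos) \<and>
           (\<forall>h. Z h = Neg \<longrightarrow> X h = Neg \<or> Y h = Neg)))"

inductive covector :: "'a svec set \<Rightarrow> 'a svec \<Rightarrow> bool" for CC where
  covector_zero: "covector CC zerovec"
| covector_comp: "X \<in> CC \<Longrightarrow> covector CC V \<Longrightarrow> covector CC (comp X V)"

text \<open>Hyperplanes of M(O) are the complements of the cocircuit supports; flats are
  intersections of (families of) hyperplanes, the empty intersection being E.\<close>
definition hyperplanes :: "'a set \<Rightarrow> 'a svec set \<Rightarrow> 'a set set" where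
  "hyperplanes E CC = zset E ` CC"

definition flats :: "'a set \<Rightarrow> 'a svec set \<Rightarrow> 'a set set" where
  "flats E CC = {E \<inter> \<Inter>H | H. H \<subseteq> hyperplanes E CC}"

text \<open>Rank of a flat F = height of F in the lattice of flats, i.e. the maximal length
  of a strictly increasing chain of flats ending in F.\<close>
definition flat_rank :: "'a set \<Rightarrow> 'a svec set \<Rightarrow> 'a set \<Rightarrow> nat" where
  "flat_rank E CC F = Max {length L - 1 | L. L \<noteq> [] \<and> set L \<subseteq> flats E CC \<and>
                              sorted_wrt (\<subset>) L \<and> last L = F}"

definition om_rank :: "'a set \<Rightarrow> 'a svec set \<Rightarrow> nat" where
  "om_rank E CC = flat_rank E CC E"

definition is_flat_of_rank :: "'a set \<Rightarrow> 'a svec set \<Rightarrow> 'a set \<Rightarrow> nat \<Rightarrow> bool" where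
  "is_flat_of_rank E CC F k \<longleftrightarrow> F \<in> flats E CC \<and> flat_rank E CC F = k"

definition is_edge :: "'a set \<Rightarrow> 'a svec set \<Rightarrow> 'a svec \<Rightarrow> bool" where
  "is_edge E CC V \<longleftrightarrow> covector CC V \<and> is_flat_of_rank E CC (zset E V) (om_rank E CC - 2)"

definition comodular :: "'a set \<Rightarrow> 'a svec set \<Rightarrow> 'a svec \<Rightarrow> 'a svec \<Rightarrow> bool" where
  "comodular E CC X Y \<longleftrightarrow> X \<in> CC \<and> Y \<in> CC \<and> X \<noteq> Y \<and> X \<noteq> vneg Y \<and> is_edge E CC (comp X Y)"

definition modular_triple :: "'a set \<Rightarrow> 'a svec set \<Rightarrow> 'a svec \<Rightarrow> 'a svec \<Rightarrow> 'a svec \<Rightarrow> bool" where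
  "modular_triple E CC C X Y \<longleftrightarrow>
     comodular E CC C X \<and> comodular E CC C Y \<and> comodular E CC X Y"

definition elim :: "'a set \<Rightarrow> 'a svec set \<Rightarrow> 'a svec \<Rightarrow> 'a svec \<Rightarrow> 'a \<Rightarrow> 'a svec" where
  "elim E CC X Y e = (THE Z. Z \<in> CC \<and> Z e = Zer \<and>
                        (\<forall>h\<in>E. h \<notin> sep X Y \<longrightarrow> Z h = comp X Y h))"

definition is_loop :: "'a svec set \<Rightarrow> 'a \<Rightarrow> bool" where
  "is_loop CC e \<longleftrightarrow> (\<forall>X\<in>CC. X e = Zer)"

text \<open>f is a coloop of M(O) iff {f} is a cocircuit of M(O).\<close>
definition is_coloop :: "'a svec set \<Rightarrow> 'a \<Rightarrow> bool" where
  "is_coloop CC e \<longleftrightarrow> (\<exists>X\<in>CC. supp X = {e})"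

definition om_program :: "'a set \<Rightarrow> 'a svec set \<Rightarrow> 'a \<Rightarrow> 'a \<Rightarrow> bool" where
  "om_program E CC g f \<longleftrightarrow> oriented_matroid E CC \<and> g \<in> E \<and> f \<in> E \<and> g \<noteq> f \<and>
     \<not> is_loop CC g \<and> \<not> is_coloop CC f"

definition arrow_base :: "'a set \<Rightarrow> 'a svec set \<Rightarrow> 'a \<Rightarrow> 'a \<Rightarrow> 'a svec \<Rightarrow> 'a svec \<Rightarrow> bool" where
  "arrow_base E CC a b X Y \<longleftrightarrow> a \<in> E \<and> b \<in> E \<and> a \<noteq> b \<and> comodular E CC X Y \<and>
      X a = Y a \<and> X a \<noteq> Zer"

definition arrow :: "'a set \<Rightarrow> 'a svec set \<Rightarrow> 'a \<Rightarrow> 'a \<Rightarrow> 'a svec \<Rightarrow> 'a svec \<Rightarrow> bool" where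
  "arrow E CC a b X Y \<longleftrightarrow> arrow_base E CC a b X Y \<and> elim E CC (vneg X) Y a b = Pos"

end

theory Submission
  imports Defs
begin

lemma sneg_sneg[simp]: "sneg (sneg s) = s" by (cases s) auto
lemma sneg_Zer_iff[simp]: "sneg s = Zer \<longleftrightarrow> s = Zer" by (cases s) auto
lemma sneg_self[simp]: "sneg s = s \<longleftrightarrow> s = Zer" by (cases s) auto
lemma vneg_apply[simp]: "vneg X e = sneg (X e)" by (simp add: vneg_def)
lemma vneg_vneg[simp]: "vneg (vneg X) = X" by (simp add: vneg_def)
lemma vneg_inj[simp]: "vneg A = vneg B \<longleftrightarrow> A = B" by (metis vneg_vneg)
lemma supp_vneg[simp]: "supp (vneg X) = supp X" by (simp add: supp_def)
lemma mem_zset: "h \<in> zset E X \<longleftrightarrow> h \<in> E \<and> X h = Zer" by (simp add: zset_def supp_def)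
lemma zset_vneg[simp]: "zset E (vneg X) = zset E X" by (simp add: zset_def)
lemma zset_comp: "zset E (comp A B) = zset E A \<inter> zset E B"
  by (auto simp: zset_def supp_def comp_def)
lemma comp_zero[simp]: "comp Y zerovec = Y" by (simp add: comp_def zerovec_def fun_eq_iff)
lemma covector_comp2: "X \<in> CC \<Longrightarrow> Y \<in> CC \<Longrightarrow> covector CC (comp X Y)"
  by (metis comp_zero covector.covector_comp covector.covector_zero)

lemma om_supp: "oriented_matroid E CC \<Longrightarrow> X \<in> CC \<Longrightarrow> supp X \<subseteq> E"
  by (simp add: oriented_matroid_def)
lemma om_outside: "oriented_matroid E CC \<Longrightarrow> X \<in> CC \<Longrightarrow> X h \<noteq> Zer \<Longrightarrow> h \<in> E"
  using om_supp[of E CC X] by (auto simp: supp_def)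
lemma om_neg: "oriented_matroid E CC \<Longrightarrow> X \<in> CC \<Longrightarrow> vneg X \<in> CC"
  by (simp add: oriented_matroid_def)
lemma om_nz: "oriented_matroid E CC \<Longrightarrow> X \<in> CC \<Longrightarrow> \<exists>k\<in>E. X k \<noteq> Zer"
proof -
  assume om: "oriented_matroid E CC" and X: "X \<in> CC"
  then have "X \<noteq> zerovec" unfolding oriented_matroid_def by auto
  then obtain k where "X k \<noteq> Zer" unfolding zerovec_def by auto
  then show ?thesis using om_outside[OF om X] by blast
qed
lemma om_incomp: "oriented_matroid E CC \<Longrightarrow> X \<in> CC \<Longrightarrow> Y \<in> CC \<Longrightarrow> supp X \<subseteq> supp Y \<Longrightarrow> X = Y \<or> X = vneg Y"
  by (simp add: oriented_matroid_def)
lemma om_elim: "oriented_matroid E CC \<Longrightarrow> X \<in> CC \<Longrightarrow> Y \<in> CC \<Longrightarrow> e \<in> sep X Y \<Longrightarrow> X \<noteq> vneg Y \<Longrightarrow>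
   \<exists>Z\<in>CC. Z e = Zer \<and> (\<forall>h. Z h = Pos \<longrightarrow> X h = Pos \<or> Y h = Pos) \<and> (\<forall>h. Z h = Neg \<longrightarrow> X h = Neg \<or> Y h = Neg)"
  unfolding oriented_matroid_def by blast

lemma flat_E: "E \<in> flats E CC" unfolding flats_def by (rule CollectI, rule exI[of _ "{}"]) auto
lemma flat_zset: "X \<in> CC \<Longrightarrow> zset E X \<in> flats E CC"
  unfolding flats_def hyperplanes_def
  by (rule CollectI, rule exI[of _ "{zset E X}"]) (auto simp: zset_def)
lemma flat_Int: "F \<in> flats E CC \<Longrightarrow> G \<in> flats E CC \<Longrightarrow> F \<inter> G \<in> flats E CC"
  unfolding flats_def
proof (clarify)
  fix H1 H2 assume "H1 \<subseteq> hyperplanes E CC" "H2 \<subseteq> hyperplanes E CC"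
  then show "\<exists>H. E \<inter> \<Inter> H1 \<inter> (E \<inter> \<Inter> H2) = E \<inter> \<Inter> H \<and> H \<subseteq> hyperplanes E CC"
    by (intro exI[of _ "H1 \<union> H2"]) auto
qed

lemma sorted_distinct: "sorted_wrt (\<subset>) (L :: 'b set list) \<Longrightarrow> distinct L"
  by (induction L) auto
lemma sorted_last: "sorted_wrt (\<subset>) (L :: 'b set list) \<Longrightarrow> x \<in> set L \<Longrightarrow> x \<subseteq> last L"
proof (induction L)
  case Nil then show ?case by simp
next
  case (Cons y ys)
  show ?case
  proof (cases "ys = []")
    case True then show ?thesis using Cons by simp
  next
    case False
    then have "last ys \<in> set ys" by simp
    then show ?thesis using Cons False by auto
  qed
qed

lemma flats_sub: "F \<in> flats E CC \<Longrightarrow> F \<subseteq> E" unfolding flats_def by auto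

lemma chains_fin: assumes "finite E"
  shows "finite {length L - 1 | L. L \<noteq> [] \<and> set L \<subseteq> flats E CC \<and> sorted_wrt (\<subset>) L \<and> last L = F}"
proof -
  have "{length L - 1 | L. L \<noteq> [] \<and> set L \<subseteq> flats E CC \<and> sorted_wrt (\<subset>) L \<and> last L = F} \<subseteq> {..card (Pow E)}"
  proof clarify
    fix L :: "'a set list" assume "set L \<subseteq> flats E CC" "sorted_wrt (\<subset>) L"
    then have "distinct L" "set L \<subseteq> Pow E" using sorted_distinct flats_sub by blast+
    then have "card (set L) \<le> card (Pow E)" using assms by (intro card_mono) auto
    then have "length L \<le> card (Pow E)" using distinct_card[OF \<open>distinct L\<close>] by simp
    then show "length L - 1 \<le> card (Pow E)" by simp
  qed
  then show ?thesis using finite_subset by blast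
qed

lemma rank_mono:
  assumes fin: "finite E" and F: "F \<in> flats E CC" and G: "G \<in> flats E CC" and FG: "F \<subset> G"
  shows "flat_rank E CC F + 1 \<le> flat_rank E CC G"
proof -
  let ?S = "\<lambda>F. {length L - 1 | L. L \<noteq> [] \<and> set L \<subseteq> flats E CC \<and> sorted_wrt (\<subset>) L \<and> last L = F}"
  have "0 \<in> ?S F" using F by (intro CollectI exI[of _ "[F]"]) auto
  then have "Max (?S F) \<in> ?S F" using chains_fin[OF fin] by (intro Max_in) auto
  then obtain L where L: "L \<noteq> []" "set L \<subseteq> flats E CC" "sorted_wrt (\<subset>) L" "last L = F"
    and r: "flat_rank E CC F = length L - 1" unfolding flat_rank_def by auto
  have "\<forall>x\<in>set L. x \<subset> G" using L(4) FG sorted_last[OF L(3)] by blast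
  then have "sorted_wrt (\<subset>) (L @ [G])" using L(3) by (simp add: sorted_wrt_append)
  then have "length (L @ [G]) - 1 \<in> ?S G" using L G by (intro CollectI exI[of _ "L @ [G]"]) auto
  then have "length L \<in> ?S G" by simp
  then have "length L \<le> flat_rank E CC G" unfolding flat_rank_def
    by (rule Max_ge[OF chains_fin[OF fin]])
  then show ?thesis using r L(1) by simp
qed

lemma om_unique:
  assumes om: "oriented_matroid E CC" and Lf: "L \<in> flats E CC"
    and Lr: "flat_rank E CC L = om_rank E CC - 2"
    and h: "h \<in> E" "h \<notin> L" and W: "W1 \<in> CC" "W2 \<in> CC"
    and L1: "L \<subseteq> zset E W1" "W1 h = Zer" and L2: "L \<subseteq> zset E W2" "W2 h = Zer"
  shows "W1 = W2 \<or> W1 = vneg W2"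
proof (rule ccontr)
  assume ne: "\<not> (W1 = W2 \<or> W1 = vneg W2)"
  have fin: "finite E" using om by (simp add: oriented_matroid_def)
  have n2: "\<not> supp W2 \<subseteq> supp W1" using om_incomp[OF om W(2) W(1)] ne by auto
  then obtain k where k: "W2 k \<noteq> Zer" "W1 k = Zer" by (auto simp: supp_def)
  have kE: "k \<in> E" using om_outside[OF om W(2) k(1)] .
  obtain k' where k': "k' \<in> E" "W1 k' \<noteq> Zer" using om_nz[OF om W(1)] by blast
  define F where "F = zset E W1 \<inter> zset E W2"
  have Ff: "F \<in> flats E CC" unfolding F_def by (intro flat_Int flat_zset W)
  have Hf: "zset E W1 \<in> flats E CC" by (intro flat_zset W)
  have s1: "L \<subset> F" using L1 L2 h unfolding F_def by (auto simp: mem_zset)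
  have s2: "F \<subset> zset E W1" using k kE unfolding F_def by (auto simp: mem_zset)
  have s3: "zset E W1 \<subset> E" using k' by (auto simp: zset_def supp_def)
  have "flat_rank E CC L + 1 \<le> flat_rank E CC F" by (rule rank_mono[OF fin Lf Ff s1])
  moreover have "flat_rank E CC F + 1 \<le> flat_rank E CC (zset E W1)" by (rule rank_mono[OF fin Ff Hf s2])
  moreover have "flat_rank E CC (zset E W1) + 1 \<le> flat_rank E CC E" by (rule rank_mono[OF fin Hf flat_E s3])
  ultimately show False using Lr unfolding om_rank_def by linarith
qed

lemma sep_sym: "sep A B = sep B A"
  unfolding sep_def by (auto; case_tac "A x"; case_tac "B x"; simp)

lemma elim_sym: "elim E CC A B a = elim E CC B A a"
proof -
  have c: "\<And>h. h \<notin> sep A B \<Longrightarrow> comp A B h = comp B A h"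
    unfolding sep_def comp_def by (case_tac "A h"; case_tac "B h"; simp)
  have "\<And>Z. (Z \<in> CC \<and> Z a = Zer \<and> (\<forall>h\<in>E. h \<notin> sep A B \<longrightarrow> Z h = comp A B h)) =
              (Z \<in> CC \<and> Z a = Zer \<and> (\<forall>h\<in>E. h \<notin> sep B A \<longrightarrow> Z h = comp B A h))"
    using c sep_sym[of A B] by auto
  then show ?thesis unfolding elim_def by simp
qed

lemma elim_spec:
  assumes om: "oriented_matroid E CC" and A: "A \<in> CC" and B: "B \<in> CC"
    and AB: "A \<noteq> B" "A \<noteq> vneg B"
    and Lf: "zset E A \<inter> zset E B \<in> flats E CC"
    and Lr: "flat_rank E CC (zset E A \<inter> zset E B) = om_rank E CC - 2"
    and a: "a \<in> sep A B"
  shows "elim E CC A B a \<in> CC \<and> elim E CC A B a a = Zer \<and>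
     (\<forall>h\<in>E. h \<notin> sep A B \<longrightarrow> elim E CC A B a h = comp A B h)"
proof -
  define L where "L = zset E A \<inter> zset E B"
  define P where "P = (\<lambda>Z. Z \<in> CC \<and> Z a = Zer \<and> (\<forall>h\<in>E. h \<notin> sep A B \<longrightarrow> Z h = comp A B h))"
  have aA: "A a \<noteq> Zer" "B a = sneg (A a)" using a by (auto simp: sep_def)
  have aE: "a \<in> E" using om_outside[OF om A aA(1)] .
  have aL: "a \<notin> L" using aA unfolding L_def by (auto simp: mem_zset)
  have uniq: "\<And>W1 W2 k. W1\<in>CC \<Longrightarrow> W2\<in>CC \<Longrightarrow> L \<subseteq> zset E W1 \<Longrightarrow> L \<subseteq> zset E W2 \<Longrightarrow>
      k \<in> E \<Longrightarrow> k \<notin> L \<Longrightarrow> W1 k = Zer \<Longrightarrow> W2 k = Zer \<Longrightarrow> W1 = W2 \<or> W1 = vneg W2"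
    using om_unique[OF om Lf Lr] unfolding L_def by blast
  have LA: "L \<subseteq> zset E A" "L \<subseteq> zset E B" unfolding L_def by auto
  obtain Z where Z: "Z \<in> CC" "Z a = Zer" and cp: "\<And>h. Z h = Pos \<Longrightarrow> A h = Pos \<or> B h = Pos"
    and cn: "\<And>h. Z h = Neg \<Longrightarrow> A h = Neg \<or> B h = Neg"
    using om_elim[OF om A B a AB(2)] by blast
  have ZL: "L \<subseteq> zset E Z"
  proof
    fix h assume "h \<in> L"
    then have "h \<in> E" "A h = Zer" "B h = Zer" unfolding L_def by (auto simp: mem_zset)
    then show "h \<in> zset E Z" using cp[of h] cn[of h] by (cases "Z h") (auto simp: mem_zset)
  qed
  have nA: "Z \<noteq> A" "Z \<noteq> vneg A" "Z \<noteq> B" "Z \<noteq> vneg B" using Z(2) aA by auto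
  have PZ: "P Z" unfolding P_def
  proof (intro conjI Z ballI impI)
    fix h assume hE: "h \<in> E" and hs: "h \<notin> sep A B"
    show "Z h = comp A B h"
    proof (cases "A h = Zer")
      case Ah: True
      show ?thesis
      proof (cases "B h = Zer")
        case True then show ?thesis using Ah cp[of h] cn[of h] by (cases "Z h") (auto simp: comp_def)
      next
        case Bh: False
        show ?thesis
        proof (rule ccontr)
          assume "Z h \<noteq> comp A B h"
          then have "Z h = Zer" using Ah Bh cp[of h] cn[of h] by (cases "Z h"; cases "B h") (auto simp: comp_def)
          moreover have "h \<notin> L" using Bh unfolding L_def by (auto simp: mem_zset)
          ultimately show False using uniq[OF Z(1) A ZL LA(1) hE] Ah nA by blast
        qed
      qed
    next
      case Ah: False
      show ?thesis
      proof (cases "B h = Zer")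
        case Bh: True
        show ?thesis
        proof (rule ccontr)
          assume "Z h \<noteq> comp A B h"
          then have "Z h = Zer" using Ah Bh cp[of h] cn[of h] by (cases "Z h"; cases "A h") (auto simp: comp_def)
          moreover have "h \<notin> L" using Ah unfolding L_def by (auto simp: mem_zset)
          ultimately show False using uniq[OF Z(1) B ZL LA(2) hE] Bh nA by blast
        qed
      next
        case Bh: False
        have BA: "B h = A h" using Ah Bh hs unfolding sep_def by (cases "A h"; cases "B h") auto
        show ?thesis
        proof (rule ccontr)
          assume "Z h \<noteq> comp A B h"
          then have Zh: "Z h = Zer" using Ah BA cp[of h] cn[of h] by (cases "Z h"; cases "A h") (auto simp: comp_def)
          have hL: "h \<notin> L" using Ah unfolding L_def by (auto simp: mem_zset)
          have hs2: "h \<in> sep A (vneg B)" using Ah BA by (simp add: sep_def)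
          obtain W where W: "W \<in> CC" "W h = Zer" and wp: "\<And>k. W k = Pos \<Longrightarrow> A k = Pos \<or> vneg B k = Pos"
            and wn: "\<And>k. W k = Neg \<Longrightarrow> A k = Neg \<or> vneg B k = Neg"
            using om_elim[OF om A om_neg[OF om B] hs2] AB(1) by auto
          have WL: "L \<subseteq> zset E W"
          proof
            fix k assume "k \<in> L"
            then have "k \<in> E" "A k = Zer" "B k = Zer" unfolding L_def by (auto simp: mem_zset)
            then show "k \<in> zset E W" using wp[of k] wn[of k] by (cases "W k") (auto simp: mem_zset)
          qed
          have "W = Z \<or> W = vneg Z" using uniq[OF W(1) Z(1) WL ZL hE hL W(2) Zh] .
          then show False
          proof
            assume "W = Z"
            have "\<forall>k. Z k \<noteq> Zer \<longrightarrow> A k \<noteq> Zer"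
            proof (intro allI impI)
              fix k assume "Z k \<noteq> Zer"
              then show "A k \<noteq> Zer" using cp[of k] cn[of k] wp[of k] wn[of k] \<open>W = Z\<close>
                by (cases "Z k"; cases "A k"; cases "B k") auto
            qed
            then have "supp Z \<subseteq> supp A" by (auto simp: supp_def)
            then show False using om_incomp[OF om Z(1) A] nA by blast
          next
            assume WZ: "W = vneg Z"
            have "\<forall>k. Z k \<noteq> Zer \<longrightarrow> B k \<noteq> Zer"
            proof (intro allI impI)
              fix k assume "Z k \<noteq> Zer"
              then show "B k \<noteq> Zer" using cp[of k] cn[of k] wp[of k] wn[of k] WZ
                by (cases "Z k"; cases "A k"; cases "B k") auto
            qed
            then have "supp Z \<subseteq> supp B" by (auto simp: supp_def)
            then show False using om_incomp[OF om Z(1) B] nA by blast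
          qed
        qed
      qed
    qed
  qed
  have uP: "Z1 = Z2" if P1: "P Z1" and P2: "P Z2" for Z1 Z2
  proof -
    have zl: "L \<subseteq> zset E Zi" if "P Zi" for Zi
    proof
      fix k assume "k \<in> L"
      then have "k \<in> E" "A k = Zer" "B k = Zer" unfolding L_def by (auto simp: mem_zset)
      then show "k \<in> zset E Zi" using that unfolding P_def by (auto simp: mem_zset sep_def comp_def)
    qed
    have "Z1 = Z2 \<or> Z1 = vneg Z2"
      using uniq[OF _ _ zl[OF P1] zl[OF P2] aE aL] P1 P2 unfolding P_def by blast
    moreover have "Z1 \<noteq> vneg Z2"
    proof
      assume Zn: "Z1 = vneg Z2"
      have "\<not> supp B \<subseteq> supp A" using om_incomp[OF om B A] AB by auto
      then obtain k where k: "B k \<noteq> Zer" "A k = Zer" by (auto simp: supp_def)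
      have kE: "k \<in> E" using om_outside[OF om B k(1)] .
      have "k \<notin> sep A B" using k by (simp add: sep_def)
      then have "Z1 k = B k" "Z2 k = B k" using P1 P2 kE k unfolding P_def by (auto simp: comp_def)
      then show False using Zn k by simp
    qed
    ultimately show ?thesis by blast
  qed
  have "P (elim E CC A B a)" unfolding elim_def P_def[symmetric]
  proof (rule theI[of P Z, OF PZ])
    fix x assume "P x" then show "x = Z" using uP PZ by blast
  qed
  then show ?thesis unfolding P_def by blast
qed

theorem lemma4p3:
  fixes E :: "'a set" and CC :: "'a svec set"
    and g f e :: 'a and C X Y :: "'a svec"
  assumes prog: "om_program E CC g f"
    and rk: "om_rank E CC \<ge> 3"
    and mt: "modular_triple E CC C X Y"
    and fl: "is_flat_of_rank E CC (zset E (comp C (comp X Y))) (om_rank E CC - 3)"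
    and signs: "C g = Pos" "X g = Pos" "Y g = Pos"
    and e_in: "e \<in> supp C" and e_z: "comp X Y e = Zer"
  shows "is_edge E CC (comp (elim E CC (vneg X) C g) (elim E CC (vneg Y) C g))
     \<and> (arrow E CC g f X Y
          \<longleftrightarrow> arrow E CC e f (elim E CC (vneg Y) C g) (elim E CC (vneg X) C g))
     \<and> (arrow E CC e f (elim E CC (vneg Y) C g) (elim E CC (vneg X) C g)
          \<longleftrightarrow> arrow E CC e f (vneg (elim E CC (vneg X) C g)) (vneg (elim E CC (vneg Y) C g)))"
proof -
  have om: "oriented_matroid E CC" and gE: "g \<in> E" and fE: "f \<in> E" and gf: "g \<noteq> f"
    using prog by (auto simp: om_program_def)
  have fin: "finite E" using om by (simp add: oriented_matroid_def)
  define r where "r = om_rank E CC"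
  have rE: "flat_rank E CC E = r" unfolding r_def om_rank_def ..
  have r3: "r \<ge> 3" using rk unfolding r_def .
  have cmCX: "comodular E CC C X" and cmCY: "comodular E CC C Y" and cmXY: "comodular E CC X Y"
    using mt by (auto simp: modular_triple_def)
  have CCs: "C \<in> CC" "X \<in> CC" "Y \<in> CC" "C \<noteq> X" "C \<noteq> vneg X" "C \<noteq> Y" "C \<noteq> vneg Y"
     "X \<noteq> Y" "X \<noteq> vneg Y"
    using cmCX cmCY cmXY by (auto simp: comodular_def)
  have eCX: "zset E C \<inter> zset E X \<in> flats E CC" "flat_rank E CC (zset E C \<inter> zset E X) = r - 2"
    using cmCX by (auto simp: comodular_def is_edge_def is_flat_of_rank_def zset_comp r_def)
  have eCY: "zset E C \<inter> zset E Y \<in> flats E CC" "flat_rank E CC (zset E C \<inter> zset E Y) = r - 2"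
    using cmCY by (auto simp: comodular_def is_edge_def is_flat_of_rank_def zset_comp r_def)
  have eXY: "zset E X \<inter> zset E Y \<in> flats E CC" "flat_rank E CC (zset E X \<inter> zset E Y) = r - 2"
    using cmXY by (auto simp: comodular_def is_edge_def is_flat_of_rank_def zset_comp r_def)
  define F3 where "F3 = zset E C \<inter> zset E X \<inter> zset E Y"
  have F3f: "F3 \<in> flats E CC" "flat_rank E CC F3 = r - 3"
    using fl unfolding F3_def by (auto simp: is_flat_of_rank_def zset_comp r_def Int_assoc)
  define X1 where "X1 = elim E CC (vneg X) C g"
  define Y1 where "Y1 = elim E CC (vneg Y) C g"
  define Z where "Z = elim E CC (vneg X) Y g"
  have sX: "zset E (vneg X) \<inter> zset E C = zset E C \<inter> zset E X" by auto
  have sY: "zset E (vneg Y) \<inter> zset E C = zset E C \<inter> zset E Y" by auto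
  have sXY: "zset E (vneg X) \<inter> zset E Y = zset E X \<inter> zset E Y" by auto
  have X1s: "X1 \<in> CC \<and> X1 g = Zer \<and> (\<forall>h\<in>E. h \<notin> sep (vneg X) C \<longrightarrow> X1 h = comp (vneg X) C h)"
    unfolding X1_def
    apply (rule elim_spec[OF om om_neg[OF om CCs(2)] CCs(1)])
    using CCs eCX signs unfolding sX r_def by (auto simp: sep_def)
  have Y1s: "Y1 \<in> CC \<and> Y1 g = Zer \<and> (\<forall>h\<in>E. h \<notin> sep (vneg Y) C \<longrightarrow> Y1 h = comp (vneg Y) C h)"
    unfolding Y1_def
    apply (rule elim_spec[OF om om_neg[OF om CCs(3)] CCs(1)])
    using CCs eCY signs unfolding sY r_def by (auto simp: sep_def)
  have Zs: "Z \<in> CC \<and> Z g = Zer \<and> (\<forall>h\<in>E. h \<notin> sep (vneg X) Y \<longrightarrow> Z h = comp (vneg X) Y h)"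
    unfolding Z_def
    apply (rule elim_spec[OF om om_neg[OF om CCs(2)] CCs(3)])
    using CCs eXY signs unfolding sXY r_def by (auto simp: sep_def)
  have X1C: "X1 \<in> CC" "X1 g = Zer" using X1s by auto
  have Y1C: "Y1 \<in> CC" "Y1 g = Zer" using Y1s by auto
  have ZC: "Z \<in> CC" "Z g = Zer" using Zs by auto
  have X1a: "X1 h = C h" if "h \<in> E" "X h = Zer" for h
    using X1s that by (auto simp: sep_def comp_def)
  have X1b: "X1 h = sneg (X h)" if "h \<in> E" "C h = Zer" for h
    using X1s that by (cases "X h") (auto simp: sep_def comp_def)
  have Y1a: "Y1 h = C h" if "h \<in> E" "Y h = Zer" for h
    using Y1s that by (auto simp: sep_def comp_def)
  have Y1b: "Y1 h = sneg (Y h)" if "h \<in> E" "C h = Zer" for h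
    using Y1s that by (cases "Y h") (auto simp: sep_def comp_def)
  have Za: "Z h = Y h" if "h \<in> E" "X h = Zer" for h
    using Zs that by (auto simp: sep_def comp_def)
  have Ce: "C e \<noteq> Zer" using e_in by (simp add: supp_def)
  have eE: "e \<in> E" using om_outside[OF om CCs(1) Ce] .
  have XYe: "X e = Zer" "Y e = Zer" using e_z by (auto simp: comp_def split: if_splits)
  have X1e: "X1 e = C e" using X1a[OF eE XYe(1)] .
  have Y1e: "Y1 e = C e" using Y1a[OF eE XYe(2)] .
  have Ze: "Z e = Zer" using Za[OF eE XYe(1)] XYe(2) by simp
  have "\<not> zset E C \<inter> zset E X \<subseteq> F3"
  proof
    assume "zset E C \<inter> zset E X \<subseteq> F3"
    then have "zset E C \<inter> zset E X = F3" unfolding F3_def by auto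
    then show False using eCX(2) F3f(2) r3 by simp
  qed
  then obtain a0 where a0: "a0 \<in> zset E C \<inter> zset E X" "a0 \<notin> F3" by blast
  then have a: "a0 \<in> E" "C a0 = Zer" "X a0 = Zer" "Y a0 \<noteq> Zer"
    unfolding F3_def by (auto simp: mem_zset)
  define a where "a = a0"
  note a = a[folded a_def]
  have X1aa: "X1 a = Zer" using X1a[OF a(1,3)] a(2) by simp
  have Y1aa: "Y1 a = sneg (Y a)" using Y1b[OF a(1,2)] .
  define M where "M = zset E X1 \<inter> zset E Y1"
  have Mf: "M \<in> flats E CC" unfolding M_def by (intro flat_Int flat_zset X1C(1) Y1C(1))
  have F3M: "F3 \<subset> M"
  proof -
    have "F3 \<subseteq> M" unfolding F3_def M_def
      using X1a Y1a by (auto simp: mem_zset)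
    moreover have "g \<in> M" "g \<notin> F3" unfolding M_def F3_def using gE X1C Y1C signs by (auto simp: mem_zset)
    ultimately show ?thesis by blast
  qed
  have aX1: "a \<in> zset E X1" "a \<notin> zset E Y1" using a X1aa Y1aa by (auto simp: mem_zset)
  have MX1: "M \<subset> zset E X1" unfolding M_def using aX1 by blast
  obtain k' where k': "k' \<in> E" "X1 k' \<noteq> Zer" using om_nz[OF om X1C(1)] by blast
  have X1E: "zset E X1 \<subset> E" using k' by (auto simp: zset_def supp_def)
  have "flat_rank E CC F3 + 1 \<le> flat_rank E CC M" by (rule rank_mono[OF fin F3f(1) Mf F3M])
  moreover have "flat_rank E CC M + 1 \<le> flat_rank E CC (zset E X1)"
    by (rule rank_mono[OF fin Mf flat_zset[OF X1C(1)] MX1])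
  moreover have "flat_rank E CC (zset E X1) + 1 \<le> flat_rank E CC E"
    by (rule rank_mono[OF fin flat_zset[OF X1C(1)] flat_E X1E])
  ultimately have Mr: "flat_rank E CC M = r - 2" using F3f(2) rE r3 by linarith
  have XY1: "X1 \<noteq> Y1" "X1 \<noteq> vneg Y1" "Y1 \<noteq> X1" "Y1 \<noteq> vneg X1"
    using X1aa Y1aa a(4) by (auto simp: fun_eq_iff) (metis sneg_Zer_iff vneg_apply)+
  have edge: "is_edge E CC (comp A B)" if "A \<in> CC" "B \<in> CC" "zset E A \<inter> zset E B = M" for A B
    unfolding is_edge_def is_flat_of_rank_def zset_comp
    using covector_comp2[OF that(1,2)] that(3) Mf Mr r_def by simp
  have edge1: "is_edge E CC (comp X1 Y1)" by (rule edge[OF X1C(1) Y1C(1)]) (simp add: M_def)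
  have edge2: "is_edge E CC (comp Y1 X1)" by (rule edge[OF Y1C(1) X1C(1)]) (auto simp: M_def)
  have edge3: "is_edge E CC (comp (vneg X1) (vneg Y1))"
    by (rule edge[OF om_neg[OF om X1C(1)] om_neg[OF om Y1C(1)]]) (auto simp: M_def)
  define Z' where "Z' = elim E CC (vneg Y1) X1 e"
  have Z's: "Z' \<in> CC \<and> Z' e = Zer \<and> (\<forall>h\<in>E. h \<notin> sep (vneg Y1) X1 \<longrightarrow> Z' h = comp (vneg Y1) X1 h)"
    unfolding Z'_def
    apply (rule elim_spec[OF om om_neg[OF om Y1C(1)] X1C(1)])
    using XY1 Mf Mr X1e Y1e Ce unfolding r_def M_def by (auto simp: sep_def Int_commute)
  have Z'M: "M \<subseteq> zset E Z'"
    using Z's unfolding M_def by (auto simp: mem_zset sep_def comp_def)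
  have Z'a: "Z' a = Y a" using Z's a X1aa Y1aa by (auto simp: sep_def comp_def)
  have Zaa: "Z a = Y a" using Za[OF a(1,3)] .
  have ZM: "M \<subseteq> zset E Z"
  proof (rule ccontr)
    assume nM: "\<not> M \<subseteq> zset E Z"
    define P where "P = zset E Z \<inter> M"
    have Pf: "P \<in> flats E CC" unfolding P_def by (intro flat_Int flat_zset ZC(1) Mf)
    have F3Z: "F3 \<subseteq> zset E Z" unfolding F3_def using Za by (auto simp: mem_zset)
    have gP: "g \<in> P" using gE ZC(2) X1C(2) Y1C(2) unfolding P_def M_def by (auto simp: mem_zset)
    have gF: "g \<notin> F3" using signs unfolding F3_def by (auto simp: mem_zset)
    have "F3 \<subset> P" using F3Z F3M gP gF unfolding P_def by blast
    then have r1: "flat_rank E CC F3 + 1 \<le> flat_rank E CC P" by (rule rank_mono[OF fin F3f(1) Pf])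
    have "P \<subset> M" using nM unfolding P_def by auto
    then have "flat_rank E CC P + 1 \<le> flat_rank E CC M" by (rule rank_mono[OF fin Pf Mf])
    then show False using r1 F3f(2) Mr r3 by linarith
  qed
  have eM: "e \<notin> M" unfolding M_def using X1e Ce by (auto simp: mem_zset)
  have "Z = Z' \<or> Z = vneg Z'"
    by (rule om_unique[OF om Mf _ eE eM ZC(1) _ ZM Ze Z'M])
       (use Mr Z's in \<open>auto simp: r_def\<close>)
  then have ZZ: "Z = Z'" using Zaa Z'a a(4) by auto
  have A1: "arrow E CC g f X Y \<longleftrightarrow> Z f = Pos"
    unfolding arrow_def arrow_base_def Z_def using gE fE gf cmXY signs by auto
  have A2: "arrow E CC e f Y1 X1 \<longleftrightarrow> e \<noteq> f \<and> Z' f = Pos"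
    unfolding arrow_def arrow_base_def Z'_def comodular_def
    using eE fE X1C Y1C XY1 edge2 X1e Y1e Ce by auto
  have A3: "arrow E CC e f (vneg X1) (vneg Y1) \<longleftrightarrow> e \<noteq> f \<and> Z' f = Pos"
    unfolding arrow_def arrow_base_def Z'_def comodular_def
    using eE fE X1C Y1C XY1 edge3 X1e Y1e Ce om_neg[OF om X1C(1)] om_neg[OF om Y1C(1)]
      elim_sym[of E CC X1 "vneg Y1" e] by auto
  show ?thesis
    unfolding X1_def[symmetric] Y1_def[symmetric]
    using edge1 A1 A2 A3 ZZ Ze by auto
qed

end
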